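(* For all $0<\varepsilon<1/8$, for all sufficiently large $\ell>0$, for all $x,y\in\bar B(0,2\ell)$ with $x\neq y$ and all $\ell'$ with $\|x-y\|\le\ell'\le2\ell$, there exist $\hat x,\hat y\in\bar B(0,3\ell)\cap\mathbb Z^d$ with $\|\hat x-\hat y\|\ge\|x-y\|$ such that every element of $\mathcal G_1(x,y,\ell')$ is included in an element of $\mathcal G_1(\hat x,\hat y,\ell'+8\varepsilon\ell)$.
   Context: Fix $d\ge2$; Euclidean norm $\|\cdot\|$, inner product $\langle\cdot,\cdot\rangle$; $\bar B(x,r)$ is the closed Euclidean ball. Paths: finite sequences $(x_0,\dots,x_r)$ in $\mathbb R^d$, length $\sum\|x_i-x_{i+1}\|$. Animals: finite connected graphs $\xi=(V,E)$ with $V\subseteq\mathbb R^d$, length $\sum_{\{x,y\}\in E}\|x-y\|$; inclusion of animals is inclusion as subgraphs. $\mathcal P(x,y,\ell)$: paths from $x$ to $y$ of length $\le\ell$; $\mathcal A^*(x,y,\ell)$: animals empty or with $\|\xi\|+\mathrm d(x,V)+\mathrm d(y,V)\le\ell$. $\mathcal G$ denotes either $\mathcal P$ or $\mathcal A^*$. For $x\ne y$, $D_1(x,y)=\{z:\langle z-x,y-x\rangle\ge0,\ \langle z-y,x-y\rangle\ge0\}$ and $\mathcal G_1(x,y,\ell)=\{\xi\in\mathcal G(x,y,\ell):\xi\subseteq D_1(x,y)\}$. *)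

theory Defs
  imports "HOL-Analysis.Analysis" "HOL-Library.Sublist"
begin

type_synonym 'a path_seq = "'a list"

definition path_len :: "'a::real_normed_vector list \<Rightarrow> real" where
  "path_len xs = sum_list (map (\<lambda>(a,b). norm (a - b)) (zip xs (tl xs)))"

definition Paths :: "'a::real_normed_vector \<Rightarrow> 'a \<Rightarrow> real \<Rightarrow> 'a list set" where
  "Paths x y l = {xs. xs \<noteq> [] \<and> hd xs = x \<and> last xs = y \<and> path_len xs \<le> l}"

text \<open>Animals: finite connected graphs (V,E) with vertices in the space; the undirected edge
  set is encoded as a symmetric irreflexive relation E \<subseteq> V \<times> V.\<close>
type_synonym 'a animal = "'a set \<times> ('a \<times> 'a) set"

definition is_animal :: "'a animal \<Rightarrow> bool" where
  "is_animal \<xi> \<longleftrightarrow> (case \<xi> of (V, E) \<Rightarrow>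
      finite V \<and> E \<subseteq> V \<times> V \<and> sym E \<and> irrefl E \<and> (\<forall>u\<in>V. \<forall>v\<in>V. (u, v) \<in> E\<^sup>*))"

text \<open>Each undirected edge {x,y} appears as (x,y) and (y,x), hence the factor 1/2.\<close>
definition animal_len :: "('a::real_normed_vector) animal \<Rightarrow> real" where
  "animal_len \<xi> = (1/2) * (\<Sum>(a,b)\<in>snd \<xi>. norm (a - b))"

definition animal_sub :: "'a animal \<Rightarrow> 'a animal \<Rightarrow> bool" where
  "animal_sub \<xi> \<eta> \<longleftrightarrow> fst \<xi> \<subseteq> fst \<eta> \<and> snd \<xi> \<subseteq> snd \<eta>"

definition AnimalsStar :: "'a::real_normed_vector \<Rightarrow> 'a \<Rightarrow> real \<Rightarrow> 'a animal set" where
  "AnimalsStar x y l = {\<xi>. is_animal \<xi> \<and>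
      (fst \<xi> = {} \<or> animal_len \<xi> + infdist x (fst \<xi>) + infdist y (fst \<xi>) \<le> l)}"

definition D1 :: "'a::real_inner \<Rightarrow> 'a \<Rightarrow> 'a set" where
  "D1 x y = {z. inner (z - x) (y - x) \<ge> 0 \<and> inner (z - y) (x - y) \<ge> 0}"

definition Paths1 :: "'a::real_inner \<Rightarrow> 'a \<Rightarrow> real \<Rightarrow> 'a list set" where
  "Paths1 x y l = {xs \<in> Paths x y l. set xs \<subseteq> D1 x y}"

definition AnimalsStar1 :: "'a::real_inner \<Rightarrow> 'a \<Rightarrow> real \<Rightarrow> 'a animal set" where
  "AnimalsStar1 x y l = {\<xi> \<in> AnimalsStar x y l. fst \<xi> \<subseteq> D1 x y}"

definition lattice_pt :: "real^'n \<Rightarrow> bool" where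
  "lattice_pt z \<longleftrightarrow> (\<forall>i. z $ i \<in> \<int>)"

end

theory Submission
  imports Defs "HOL-Library.Transitive_Closure_Table"
begin


definition rnd :: "real^'n \<Rightarrow> real^'n" where
  "rnd z = (\<chi> i. of_int \<lfloor>z $ i\<rfloor>)"

lemma rnd_lattice: "lattice_pt (rnd z)"
  by (simp add: lattice_pt_def rnd_def)

lemma rnd_err: "norm (rnd z - z) \<le> real CARD('n)" for z :: "real^'n"
proof -
  have "norm (rnd z - z) \<le> (\<Sum>i\<in>UNIV. \<bar>(rnd z - z) $ i\<bar>)" by (rule norm_le_l1_cart)
  also have "\<dots> \<le> (\<Sum>i\<in>(UNIV::'n set). 1)"
    apply (rule sum_mono)
    apply (simp add: rnd_def)
    by (smt (verit) of_int_floor_le real_of_int_floor_add_one_gt)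
  finally show ?thesis by simp
qed

definition ext :: "real^'n \<Rightarrow> real^'n \<Rightarrow> real \<Rightarrow> real^'n" where
  "ext x y t = rnd (x + (t / dist x y) *\<^sub>R (x - y))"

lemma ext_decomp:
  fixes x y :: "real^'n"
  assumes "x \<noteq> y"
  defines "u \<equiv> (1 / dist x y) *\<^sub>R (y - x)"
  obtains e where "ext x y t = x - t *\<^sub>R u + e" "norm e \<le> real CARD('n)"
    "norm u = 1" "y - x = dist x y *\<^sub>R u"
proof -
  have L: "dist x y > 0" using assms by simp
  have eq: "x + (t / dist x y) *\<^sub>R (x - y) = x - t *\<^sub>R u"
    unfolding u_def by (simp add: algebra_simps scaleR_diff_right)
  have nu: "norm u = 1" unfolding u_def using L by (simp add: dist_norm norm_minus_commute)
  have yx: "y - x = dist x y *\<^sub>R u" unfolding u_def using L by simp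
  show ?thesis
    apply (rule that[of "ext x y t - (x - t *\<^sub>R u)"])
    using rnd_err[of "x - t *\<^sub>R u"] nu yx by (auto simp: ext_def eq)
qed



lemma geo:
  fixes x y z :: "real^'n"
  assumes xy: "x \<noteq> y" and tc: "t \<ge> real CARD('n)" and zD: "z \<in> D1 x y"
    and zR: "norm (z - x) \<le> R"
    and big: "2*t*(t - real CARD('n)) \<ge> (R + t + real CARD('n)) * (2 * real CARD('n))"
  shows "inner (z - ext x y t) (ext y x t - ext x y t) \<ge> 0"
proof -
  define c where "c = real CARD('n)"
  define L where "L = dist x y"
  define u where "u = (1 / dist x y) *\<^sub>R (y - x)"
  obtain e1 where e1: "ext x y t = x - t *\<^sub>R u + e1" "norm e1 \<le> c"
    and nu: "norm u = 1" and yx: "y - x = L *\<^sub>R u"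
    using ext_decomp[OF xy, of t] unfolding u_def c_def L_def by metis
  have xy': "y \<noteq> x" using xy by simp
  obtain e2 where e2: "ext y x t = y - t *\<^sub>R ((1 / dist y x) *\<^sub>R (x - y)) + e2" "norm e2 \<le> c"
    using ext_decomp[OF xy', of t] unfolding c_def by metis
  have "(1 / dist y x) *\<^sub>R (x - y) = - u" unfolding u_def
    by (simp add: dist_commute scaleR_diff_right)
  then have e2': "ext y x t = y + t *\<^sub>R u + e2" using e2 by simp
  have L0: "L \<ge> 0" unfolding L_def by simp
  define a where "a = z - x"
  have zx: "z - ext x y t = a + t *\<^sub>R u - e1" unfolding a_def e1 by (simp add: algebra_simps)
  have yhxh: "ext y x t - ext x y t = (L + 2*t) *\<^sub>R u + (e2 - e1)"
  proof -
    have tt: "t *\<^sub>R u + t *\<^sub>R u = (2*t) *\<^sub>R u" by (simp add: scaleR_add_left[symmetric])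
    have "ext y x t - ext x y t = (y - x) + (t *\<^sub>R u + t *\<^sub>R u) + (e2 - e1)"
      unfolding e1 e2' by (simp add: algebra_simps)
    hence "ext y x t - ext x y t = (y - x) + (2*t) *\<^sub>R u + (e2 - e1)" by (simp only: tt)
    also have "\<dots> = (L + 2*t) *\<^sub>R u + (e2 - e1)" unfolding yx by (simp add: algebra_simps)
    finally show ?thesis .
  qed
  have uu: "inner u u = 1" using nu by (simp add: dot_square_norm)
  have au: "inner a u \<ge> 0"
  proof -
    have "inner (z - x) (y - x) \<ge> 0" using zD by (simp add: D1_def)
    hence "L * inner a u \<ge> 0" unfolding a_def yx by simp
    moreover have "L > 0" unfolding L_def using xy by simp
    ultimately show ?thesis by (simp add: zero_le_mult_iff)
  qed
  have e1u: "inner e1 u \<le> c"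
    using norm_cauchy_schwarz[of e1 u] nu e1(2) by simp
  define w where "w = a + t *\<^sub>R u - e1"
  have nw: "norm w \<le> R + t + c"
  proof -
    have "norm w \<le> norm a + norm (t *\<^sub>R u) + norm e1" unfolding w_def
      by (smt (verit) norm_triangle_ineq norm_triangle_ineq4)
    also have "\<dots> \<le> R + t + c" using zR e1(2) nu tc unfolding a_def c_def by simp
    finally show ?thesis .
  qed
  have ne: "norm (e2 - e1) \<le> 2*c" using e1(2) e2(2) norm_triangle_ineq4[of e2 e1] by simp
  have we: "inner w (e2 - e1) \<ge> - ((R + t + c) * (2*c))"
  proof -
    have "\<bar>inner w (e2 - e1)\<bar> \<le> norm w * norm (e2 - e1)" by (rule Cauchy_Schwarz_ineq2)
    also have "\<dots> \<le> (R + t + c) * (2*c)"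
      by (intro mult_mono nw ne) (use nw norm_ge_zero[of w] norm_ge_zero[of "e2-e1"] in linarith)+
    finally show ?thesis by simp
  qed
  have expand: "inner (z - ext x y t) (ext y x t - ext x y t)
      = (L + 2*t) * inner a u + t * (L + 2*t) - (L + 2*t) * inner e1 u + inner w (e2 - e1)"
    unfolding zx yhxh w_def[symmetric]
    by (simp add: w_def inner_add_left inner_add_right inner_diff_left inner_diff_right uu inner_commute algebra_simps)
  have t1: "(L + 2*t) * inner a u \<ge> 0" using au L0 tc by simp
  have t2: "t * (L + 2*t) - (L + 2*t) * inner e1 u \<ge> (L + 2*t) * (t - c)"
    using e1u L0 tc mult_left_mono[OF e1u, of "L + 2*t"] unfolding c_def by (simp add: algebra_simps)
  have t3: "(L + 2*t) * (t - c) \<ge> 2*t*(t - c)"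
    using L0 tc unfolding c_def by (simp add: mult_right_mono)
  show ?thesis using expand t1 t2 t3 we big unfolding c_def by linarith
qed



lemma D1_sym: "D1 y x = D1 x y"
  unfolding D1_def by auto

lemma ext_props:
  fixes x y :: "real^'n"
  assumes xy: "x \<noteq> y" and tc: "t \<ge> real CARD('n)"
  shows "norm (ext x y t - x) \<le> t + real CARD('n)"
    and "t > real CARD('n) \<Longrightarrow> ext x y t \<notin> D1 x y"
    and "dist (ext x y t) (ext y x t) \<ge> dist x y"
proof -
  define c where "c = real CARD('n)"
  define L where "L = dist x y"
  define u where "u = (1 / dist x y) *\<^sub>R (y - x)"
  obtain e1 where e1: "ext x y t = x - t *\<^sub>R u + e1" "norm e1 \<le> c"
    and nu: "norm u = 1" and yx: "y - x = L *\<^sub>R u"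
    using ext_decomp[OF xy, of t] unfolding u_def c_def L_def by metis
  have xy': "y \<noteq> x" using xy by simp
  obtain e2 where e2: "ext y x t = y - t *\<^sub>R ((1 / dist y x) *\<^sub>R (x - y)) + e2" "norm e2 \<le> c"
    using ext_decomp[OF xy', of t] unfolding c_def by metis
  have "(1 / dist y x) *\<^sub>R (x - y) = - u" unfolding u_def
    by (simp add: dist_commute scaleR_diff_right)
  then have e2': "ext y x t = y + t *\<^sub>R u + e2" using e2 by simp
  have L0: "L > 0" unfolding L_def using xy by simp
  have t0: "t \<ge> 0" using tc by simp
  have uu: "inner u u = 1" using nu by (simp add: dot_square_norm)
  show "norm (ext x y t - x) \<le> t + real CARD('n)"
  proof -
    have "norm (ext x y t - x) = norm (e1 - t *\<^sub>R u)" unfolding e1 by (simp add: algebra_simps)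
    also have "\<dots> \<le> norm e1 + norm (t *\<^sub>R u)" by (rule norm_triangle_ineq4)
    finally show ?thesis using e1(2) nu t0 unfolding c_def by simp
  qed
  show "ext x y t \<notin> D1 x y" if tc': "t > real CARD('n)"
  proof
    assume "ext x y t \<in> D1 x y"
    hence "inner (ext x y t - x) (y - x) \<ge> 0" by (simp add: D1_def)
    moreover have "inner (ext x y t - x) (y - x) = L * (inner e1 u - t)"
      unfolding e1 yx by (simp add: inner_add_left inner_diff_left uu algebra_simps)
    moreover have "inner e1 u \<le> c" using norm_cauchy_schwarz[of e1 u] nu e1(2) by simp
    ultimately show False using L0 tc' unfolding c_def by (simp add: zero_le_mult_iff)
  qed
  show "dist (ext x y t) (ext y x t) \<ge> dist x y"
  proof -
    have tt: "t *\<^sub>R u + t *\<^sub>R u = (2*t) *\<^sub>R u" by (simp add: scaleR_add_left[symmetric])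
    have "ext y x t - ext x y t = (y - x) + (t *\<^sub>R u + t *\<^sub>R u) + (e2 - e1)"
      unfolding e1 e2' by (simp add: algebra_simps)
    hence d: "ext y x t - ext x y t = L *\<^sub>R u + (2*t) *\<^sub>R u + (e2 - e1)" by (simp only: tt yx)
    have ne: "norm (e2 - e1) \<le> 2*c" using e1(2) e2(2) norm_triangle_ineq4[of e2 e1] by simp
    have "inner (e2 - e1) u \<ge> - (2*c)"
      using norm_cauchy_schwarz[of "e1-e2" u] nu ne
      by (simp add: norm_minus_commute inner_diff_left)
    moreover have "inner (ext y x t - ext x y t) u = L + 2*t + inner (e2 - e1) u"
      unfolding d by (simp add: inner_add_left uu)
    moreover have "inner (ext y x t - ext x y t) u \<le> norm (ext y x t - ext x y t)"
      using norm_cauchy_schwarz[of "ext y x t - ext x y t" u] nu by simp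
    ultimately have "norm (ext y x t - ext x y t) \<ge> L" using tc unfolding c_def by linarith
    thus ?thesis unfolding L_def by (simp add: dist_norm norm_minus_commute)
  qed
qed

lemma path_len_Nil[simp]: "path_len [] = 0" and path_len_single[simp]: "path_len [a] = 0"
  by (simp_all add: path_len_def)

lemma path_len_Cons2[simp]: "path_len (a # b # xs) = norm (a - b) + path_len (b # xs)"
  by (simp add: path_len_def)

lemma path_len_nonneg: "path_len xs \<ge> 0"
  by (induction xs rule: induct_list012) auto

lemma path_len_snoc: "xs \<noteq> [] \<Longrightarrow> path_len (xs @ [b]) = path_len xs + norm (last xs - b)"
  by (induction xs rule: induct_list012) auto

lemma path_len_hd: "z \<in> set xs \<Longrightarrow> norm (z - hd xs) \<le> path_len xs"
proof (induction xs rule: induct_list012)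
  case (3 a b xs)
  show ?case
  proof (cases "z = a")
    case True then show ?thesis using path_len_nonneg[of "b#xs"] by simp
  next
    case False
    hence "z \<in> set (b # xs)" using 3 by simp
    hence "norm (z - b) \<le> path_len (b # xs)" using 3 by simp
    moreover have "norm (z - a) \<le> norm (z - b) + norm (a - b)"
      by (metis norm_diff_triangle_ineq add.commute diff_add_cancel norm_triangle_ineq4 dist_norm dist_triangle2)
    ultimately show ?thesis by simp
  qed
qed auto



fun pedges :: "'a \<Rightarrow> 'a list \<Rightarrow> ('a \<times> 'a) set" where
  "pedges a [] = {}"
| "pedges a (y # ys) = {(a, y), (y, a)} \<union> pedges y ys"

lemma pedges_sub: "pedges a xs \<subseteq> set (a # xs) \<times> set (a # xs)"
  by (induction xs arbitrary: a) auto

lemma pedges_finite: "finite (pedges a xs)"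
  by (induction xs arbitrary: a) auto

lemma path_edges:
  fixes a b :: "'a::real_normed_vector"
  assumes "rtrancl_path R a xs b" "\<And>p q. R p q \<Longrightarrow> (p, q) \<in> E" "distinct (a # xs)" "sym E"
  shows "pedges a xs \<subseteq> E \<and> 2 * norm (b - a) \<le> (\<Sum>(p,q)\<in>pedges a xs. norm (p - q))"
  using assms
proof (induction rule: rtrancl_path.induct)
  case (base x) then show ?case by simp
next
  case (step x y ys z)
  have IH: "pedges y ys \<subseteq> E \<and> 2 * norm (z - y) \<le> (\<Sum>(p,q)\<in>pedges y ys. norm (p - q))"
    using step by simp
  have xy: "x \<noteq> y" using step.prems(2) by simp
  have xn: "x \<notin> set (y # ys)" using step.prems(2) by simp
  have disj: "{(x, y), (y, x)} \<inter> pedges y ys = {}"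
    using pedges_sub[of y ys] xn by auto
  have "(\<Sum>(p,q)\<in>pedges x (y # ys). norm (p - q))
      = (\<Sum>(p,q)\<in>{(x, y), (y, x)}. norm (p - q)) + (\<Sum>(p,q)\<in>pedges y ys. norm (p - q))"
    by (simp only: pedges.simps, rule sum.union_disjoint) (use disj pedges_finite in auto)
  also have "(\<Sum>(p,q)\<in>{(x, y), (y, x)}. norm (p - q)) = 2 * norm (x - y)"
    using xy by (simp add: norm_minus_commute)
  finally have s: "(\<Sum>(p,q)\<in>pedges x (y # ys). norm (p - q))
      = 2 * norm (x - y) + (\<Sum>(p,q)\<in>pedges y ys. norm (p - q))" .
  have tri: "norm (z - x) \<le> norm (x - y) + norm (z - y)"
    by (metis add.commute dist_norm dist_triangle2 norm_minus_commute)
  have "(x, y) \<in> E" using step by blast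
  moreover have "(y, x) \<in> E" using \<open>(x, y) \<in> E\<close> step.prems(3) by (meson symD)
  ultimately show ?case using IH s tri by auto
qed


lemma animal_radius:
  fixes V :: "'a::real_normed_vector set"
  assumes an: "is_animal (V, E)" and v0: "v0 \<in> V" and v: "v \<in> V"
  shows "norm (v - v0) \<le> animal_len (V, E)"
proof -
  have fin: "finite V" and EV: "E \<subseteq> V \<times> V" and sE: "sym E" and conn: "(v0, v) \<in> E\<^sup>*"
    using an v0 v unfolding is_animal_def by auto
  have "(\<lambda>p q. (p, q) \<in> E)\<^sup>*\<^sup>* v0 v" using conn by (simp add: rtranclp_rtrancl_eq)
  then obtain xs where "rtrancl_path (\<lambda>p q. (p, q) \<in> E) v0 xs v"
    by (auto simp: rtranclp_eq_rtrancl_path)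
  then obtain xs' where p: "rtrancl_path (\<lambda>p q. (p, q) \<in> E) v0 xs' v" "distinct (v0 # xs')"
    by (rule rtrancl_path_distinct)
  have r: "pedges v0 xs' \<subseteq> E \<and> 2 * norm (v - v0) \<le> (\<Sum>(p,q)\<in>pedges v0 xs'. norm (p - q))"
    by (rule path_edges[OF p(1) _ p(2) sE]) simp
  have finE: "finite E" using fin EV finite_subset by blast
  have "(\<Sum>(p,q)\<in>pedges v0 xs'. norm (p - q)) \<le> (\<Sum>(p,q)\<in>E. norm (p - q))"
    by (rule sum_mono2[OF finE]) (use r in auto)
  thus ?thesis using r by (simp add: animal_len_def)
qed

lemma sum_insert_le:
  assumes "finite S" "\<And>z. f z \<ge> (0::real)"
  shows "sum f (insert a S) \<le> f a + sum f S"
  using assms by (cases "a \<in> S") (auto simp: insert_absorb add_increasing)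



lemma inD1:
  fixes x y z :: "real^'n"
  assumes xy: "x \<noteq> y" and tc: "t \<ge> real CARD('n)" and zD: "z \<in> D1 x y"
    and zx: "norm (z - x) \<le> 2*l" and dxy: "dist x y \<le> 2*l"
    and big: "2*t*(t - real CARD('n)) \<ge> (4*l + t + real CARD('n)) * (2 * real CARD('n))"
  shows "z \<in> D1 (ext x y t) (ext y x t)"
proof -
  have l0: "l \<ge> 0" using zx norm_ge_zero[of "z-x"] by linarith
  have zy: "norm (z - y) \<le> 4*l"
  proof -
    have "norm (z - y) \<le> norm (z - x) + norm (x - y)"
      by (metis diff_add_cancel norm_triangle_ineq add_diff_eq diff_diff_eq2)
    thus ?thesis using zx dxy by (simp add: dist_norm)
  qed
  have a: "inner (z - ext x y t) (ext y x t - ext x y t) \<ge> 0"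
    by (rule geo[OF xy tc zD _ big]) (use zx l0 in simp)
  have xy': "y \<noteq> x" using xy by simp
  have b: "inner (z - ext y x t) (ext x y t - ext y x t) \<ge> 0"
    by (rule geo[OF xy' tc _ zy big]) (use zD D1_sym in auto)
  show ?thesis using a b by (simp add: D1_def inner_commute)
qed

lemma main_path:
  fixes x y :: "real^'n"
  assumes xy: "x \<noteq> y" and dxy: "dist x y \<le> l'" and l': "l' \<le> 2*l"
    and tc: "t > real CARD('n)"
    and big: "2*t*(t - real CARD('n)) \<ge> (4*l + t + real CARD('n)) * (2 * real CARD('n))"
    and p: "p \<in> Paths1 x y l'"
  shows "ext x y t # p @ [ext y x t] \<in> Paths1 (ext x y t) (ext y x t) (l' + 2*t + 2*real CARD('n))"
proof -
  define xh where "xh = ext x y t"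
  define yh where "yh = ext y x t"
  have pne: "p \<noteq> []" and hp: "hd p = x" and lp: "last p = y" and pl: "path_len p \<le> l'"
    and pD: "set p \<subseteq> D1 x y"
    using p by (auto simp: Paths1_def Paths_def)
  have tc': "t \<ge> real CARD('n)" using tc by simp
  have n1: "norm (xh - x) \<le> t + real CARD('n)" unfolding xh_def by (rule ext_props(1)[OF xy tc'])
  have n2: "norm (yh - y) \<le> t + real CARD('n)" unfolding yh_def using xy by (intro ext_props(1)) (use tc' in auto)
  have len: "path_len (xh # p @ [yh]) = norm (xh - x) + path_len p + norm (y - yh)"
  proof -
    obtain b bs where pb: "p = b # bs" using pne by (cases p) auto
    have "path_len (xh # p @ [yh]) = norm (xh - x) + path_len (p @ [yh])"
      using pb hp by simp
    also have "\<dots> = norm (xh - x) + path_len p + norm (y - yh)"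
      using path_len_snoc[OF pne] lp by simp
    finally show ?thesis .
  qed
  have "path_len (xh # p @ [yh]) \<le> l' + 2*t + 2*real CARD('n)"
    using len n1 n2 pl by (simp add: norm_minus_commute)
  moreover have "set (xh # p @ [yh]) \<subseteq> D1 xh yh"
  proof -
    have "z \<in> D1 xh yh" if "z \<in> set p" for z
      unfolding xh_def yh_def
    proof (rule inD1[OF xy tc'])
      show "z \<in> D1 x y" using pD that by auto
      show "norm (z - x) \<le> 2*l" using path_len_hd[OF that] hp pl l' by simp
      show "dist x y \<le> 2*l" using dxy l' by simp
    qed (rule big)
    moreover have "xh \<in> D1 xh yh" "yh \<in> D1 xh yh" by (auto simp: D1_def inner_commute)
    ultimately show ?thesis by auto
  qed
  ultimately show ?thesis unfolding xh_def[symmetric] yh_def[symmetric]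
    by (simp add: Paths1_def Paths_def)
qed



lemma main_animal:
  fixes x y :: "real^'n"
  assumes xy: "x \<noteq> y" and dxy: "dist x y \<le> l'" and l': "l' \<le> 2*l"
    and tc: "t > real CARD('n)"
    and big: "2*t*(t - real CARD('n)) \<ge> (4*l + t + real CARD('n)) * (2 * real CARD('n))"
    and xi: "\<xi> \<in> AnimalsStar1 x y l'"
  shows "\<exists>\<eta>\<in>AnimalsStar1 (ext x y t) (ext y x t) (l' + 2*t + 2*real CARD('n)). animal_sub \<xi> \<eta>"
proof -
  define xh where "xh = ext x y t"
  define yh where "yh = ext y x t"
  define c where "c = real CARD('n)"
  obtain V E where xiVE: "\<xi> = (V, E)" by fastforce
  have an: "is_animal (V, E)" and VD: "V \<subseteq> D1 x y"
    and lenc: "V = {} \<or> animal_len (V, E) + infdist x V + infdist y V \<le> l'"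
    using xi unfolding xiVE by (auto simp: AnimalsStar1_def AnimalsStar_def)
  have fin: "finite V" and EV: "E \<subseteq> V \<times> V" and sE: "sym E" and irE: "irrefl E"
    and conn: "\<forall>u\<in>V. \<forall>v\<in>V. (u, v) \<in> E\<^sup>*"
    using an unfolding is_animal_def by auto
  show ?thesis
  proof (cases "V = {}")
    case True
    hence "E = {}" using EV by auto
    hence "({}, {}) \<in> AnimalsStar1 xh yh (l' + 2*t + 2*c) \<and> animal_sub \<xi> ({}, {})"
      using True unfolding xiVE
      by (simp add: AnimalsStar1_def AnimalsStar_def is_animal_def animal_sub_def irrefl_def sym_def)
    thus ?thesis unfolding xh_def yh_def c_def by blast
  next
    case False
    have lenV: "animal_len (V, E) + infdist x V + infdist y V \<le> l'" using lenc False by simp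
    have clV: "closed V" using fin by (simp add: finite_imp_closed)
    obtain v0 where v0: "v0 \<in> V" "infdist x V = dist x v0"
      using infdist_attains_inf[OF clV False] by metis
    obtain v1 where v1: "v1 \<in> V" "infdist y V = dist y v1"
      using infdist_attains_inf[OF clV False] by metis
    have tc': "t \<ge> c" using tc unfolding c_def by simp
    have xy': "y \<noteq> x" using xy by simp
    have xhV: "xh \<notin> V" using VD ext_props(2)[OF xy tc'[unfolded c_def] tc] unfolding xh_def by auto
    have yhV: "yh \<notin> V" using VD ext_props(2)[OF xy' tc'[unfolded c_def] tc] D1_sym unfolding yh_def by auto
    have n1: "norm (xh - x) \<le> t + c" unfolding xh_def c_def by (rule ext_props(1)[OF xy tc'[unfolded c_def]])
    have n2: "norm (yh - y) \<le> t + c" unfolding yh_def c_def by (rule ext_props(1)[OF xy' tc'[unfolded c_def]])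
    have Lpos: "animal_len (V, E) \<ge> 0"
      unfolding animal_len_def by (auto intro: sum_nonneg)
    define N where "N = {(xh, v0), (v0, xh), (yh, v1), (v1, yh)}"
    define V' where "V' = V \<union> {xh, yh}"
    define E' where "E' = E \<union> N"
    have finE: "finite E" using fin EV finite_subset by blast
    have an': "is_animal (V', E')"
      unfolding is_animal_def
    proof (simp, intro conjI)
      show "finite V'" using fin unfolding V'_def by simp
      show "E' \<subseteq> V' \<times> V'" using EV v0 v1 unfolding E'_def V'_def N_def by auto
      show "sym E'" using sE unfolding E'_def N_def sym_def by auto
      show "irrefl E'" using irE xhV yhV v0 v1 unfolding E'_def N_def irrefl_def by auto
      have sub: "E\<^sup>* \<subseteq> E'\<^sup>*" unfolding E'_def by (rule rtrancl_mono) auto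
      have to: "(u, v0) \<in> E'\<^sup>* \<and> (v0, u) \<in> E'\<^sup>*" if "u \<in> V'" for u
      proof -
        have "(v1, v0) \<in> E'\<^sup>*" "(v0, v1) \<in> E'\<^sup>*" using conn v0 v1 sub by auto
        moreover have "(xh, v0) \<in> E'" "(v0, xh) \<in> E'" "(yh, v1) \<in> E'" "(v1, yh) \<in> E'"
          unfolding E'_def N_def by auto
        ultimately have "(yh, v0) \<in> E'\<^sup>*" "(v0, yh) \<in> E'\<^sup>*"
          by (meson converse_rtrancl_into_rtrancl rtrancl.rtrancl_into_rtrancl)+
        moreover have "u \<in> V \<Longrightarrow> (u, v0) \<in> E'\<^sup>* \<and> (v0, u) \<in> E'\<^sup>*" using conn v0 sub by auto
        ultimately show ?thesis using that \<open>(xh, v0) \<in> E'\<close> \<open>(v0, xh) \<in> E'\<close>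
          unfolding V'_def by auto
      qed
      show "\<forall>u\<in>V'. \<forall>v\<in>V'. (u, v) \<in> E'\<^sup>*"
        using to by (meson rtrancl_trans)
    qed
    have len': "animal_len (V', E') \<le> animal_len (V, E) + norm (xh - v0) + norm (yh - v1)"
    proof -
      let ?f = "\<lambda>(a::real^'n, b). norm (a - b)"
      have f0: "\<And>z. ?f z \<ge> 0" by auto
      have "sum ?f E' = sum ?f E + sum ?f N - sum ?f (E \<inter> N)"
        unfolding E'_def by (rule sum_Un) (use finE N_def in auto)
      moreover have "sum ?f (E \<inter> N) \<ge> 0" by (rule sum_nonneg) (use f0 in auto)
      ultimately have "sum ?f E' \<le> sum ?f E + sum ?f N" by linarith
      also have "sum ?f N \<le> 2 * norm (xh - v0) + 2 * norm (yh - v1)"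
      proof -
        have "sum ?f N \<le> ?f (xh, v0) + (?f (v0, xh) + (?f (yh, v1) + (?f (v1, yh) + sum ?f {})))"
          unfolding N_def
          by (intro order.trans[OF sum_insert_le] add_left_mono sum_insert_le f0) auto
        thus ?thesis by (simp add: norm_minus_commute)
      qed
      finally show ?thesis by (simp add: animal_len_def)
    qed
    have d0: "norm (xh - v0) \<le> t + c + infdist x V"
      using n1 v0(2) norm_triangle_ineq[of "xh - x" "x - v0"] by (simp add: dist_norm)
    have d1: "norm (yh - v1) \<le> t + c + infdist y V"
      using n2 v1(2) norm_triangle_ineq[of "yh - y" "y - v1"] by (simp add: dist_norm)
    have inf0: "infdist xh V' = 0" "infdist yh V' = 0" unfolding V'_def by auto
    have lenok: "animal_len (V', E') + infdist xh V' + infdist yh V' \<le> l' + 2*t + 2*c"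
      using len' d0 d1 inf0 lenV by linarith
    have D1': "V' \<subseteq> D1 xh yh"
    proof -
      have "v \<in> D1 xh yh" if "v \<in> V" for v
        unfolding xh_def yh_def
      proof (rule inD1[OF xy tc'[unfolded c_def]])
        show "v \<in> D1 x y" using VD that by auto
        have "norm (v - v0) \<le> animal_len (V, E)" by (rule animal_radius[OF an v0(1) that])
        moreover have "norm (v - x) \<le> norm (v - v0) + norm (x - v0)"
          using norm_triangle_ineq4[of "v - v0" "x - v0"] by simp
        moreover have "infdist y V \<ge> 0" by (rule infdist_nonneg)
        ultimately show "norm (v - x) \<le> 2*l" using lenV v0(2) l' by (simp add: dist_norm)
        show "dist x y \<le> 2*l" using dxy l' by simp
      qed (rule big)
      moreover have "xh \<in> D1 xh yh" "yh \<in> D1 xh yh" by (auto simp: D1_def inner_commute)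
      ultimately show ?thesis unfolding V'_def by auto
    qed
    have "(V', E') \<in> AnimalsStar1 xh yh (l' + 2*t + 2*c)"
      using an' lenok D1' by (simp add: AnimalsStar1_def AnimalsStar_def)
    moreover have "animal_sub \<xi> (V', E')" unfolding xiVE animal_sub_def V'_def E'_def by auto
    ultimately show ?thesis unfolding xh_def yh_def c_def by blast
  qed
qed



lemma key:
  fixes \<epsilon> l :: real
  assumes e: "0 < \<epsilon>" "\<epsilon> < 1/8"
    and lM: "l \<ge> (3*real CARD('n) + 4*real CARD('n)/\<epsilon>)/\<epsilon> + 2*real CARD('n)"
    and x: "(x::real^'n) \<in> cball 0 (2*l)" and y: "y \<in> cball 0 (2*l)" and xy: "x \<noteq> y"
    and dxy: "dist x y \<le> l'" and l': "l' \<le> 2*l"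
  shows "l > 0"
    and "ext x y (\<epsilon>*l) \<in> cball 0 (3*l)" "lattice_pt (ext x y (\<epsilon>*l))"
    and "ext y x (\<epsilon>*l) \<in> cball 0 (3*l)" "lattice_pt (ext y x (\<epsilon>*l))"
    and "dist (ext x y (\<epsilon>*l)) (ext y x (\<epsilon>*l)) \<ge> dist x y"
    and "\<forall>p\<in>Paths1 x y l'. \<exists>q\<in>Paths1 (ext x y (\<epsilon>*l)) (ext y x (\<epsilon>*l)) (l' + 8*\<epsilon>*l). sublist p q"
    and "\<forall>\<xi>\<in>AnimalsStar1 x y l'. \<exists>\<eta>\<in>AnimalsStar1 (ext x y (\<epsilon>*l)) (ext y x (\<epsilon>*l)) (l' + 8*\<epsilon>*l). animal_sub \<xi> \<eta>"
proof -
  define c where "c = real CARD('n)"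
  define t where "t = \<epsilon> * l"
  have c1: "c \<ge> 1" unfolding c_def by simp
  have q: "(3*c + 4*c/\<epsilon>)/\<epsilon> > 0"
    using e c1 by (intro divide_pos_pos add_pos_pos) auto
  have lM': "l \<ge> (3*c + 4*c/\<epsilon>)/\<epsilon> + 2*c" using lM unfolding c_def .
  show l0: "l > 0" using lM' q c1 by linarith
  have "(3*c + 4*c/\<epsilon>) \<le> \<epsilon> * l"
  proof -
    have "(3*c + 4*c/\<epsilon>)/\<epsilon> \<le> l" using lM' c1 by linarith
    thus ?thesis using e by (simp add: divide_le_eq mult.commute)
  qed
  hence tb: "t \<ge> 3*c + 4*c/\<epsilon>" unfolding t_def .
  have cl: "4*c/\<epsilon> * t = 4*c*l" unfolding t_def using e by simp
  have tc: "t > c" using tb c1 e by (smt (verit) divide_nonneg_pos)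
  have big0: "t*t \<ge> 3*c*t + 4*c*l"
  proof -
    have "t * t \<ge> (3*c + 4*c/\<epsilon>) * t" using tb tc c1 by (intro mult_right_mono) auto
    thus ?thesis using cl by (simp add: algebra_simps)
  qed
  have "c * t \<ge> c * c" using tc c1 by (intro mult_left_mono) auto
  hence big: "2*t*(t - c) \<ge> (4*l + t + c) * (2*c)" using big0 by (simp add: algebra_simps)
  have budget: "2*t + 2*c \<le> 8*\<epsilon>*l" using tc c1 unfolding t_def by linarith
  have xy': "y \<noteq> x" using xy by simp
  have tc': "t \<ge> real CARD('n)" using tc c_def by simp
  have lc: "t + c \<le> l"
  proof -
    have "t \<le> l/8" unfolding t_def using e l0 by (simp add: mult_right_mono)
    moreover have "c \<le> l/2" using lM' q by linarith
    ultimately show ?thesis using l0 by linarith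
  qed
  show "ext x y (\<epsilon>*l) \<in> cball 0 (3*l)"
    using ext_props(1)[OF xy tc'] x lc norm_triangle_ineq[of "ext x y t - x" x]
    unfolding t_def c_def by (simp add: dist_norm)
  show "ext y x (\<epsilon>*l) \<in> cball 0 (3*l)"
    using ext_props(1)[OF xy' tc'] y lc norm_triangle_ineq[of "ext y x t - y" y]
    unfolding t_def c_def by (simp add: dist_norm)
  show "lattice_pt (ext x y (\<epsilon>*l))" "lattice_pt (ext y x (\<epsilon>*l))"
    by (simp_all add: ext_def rnd_lattice)
  show "dist (ext x y (\<epsilon>*l)) (ext y x (\<epsilon>*l)) \<ge> dist x y"
    using ext_props(3)[OF xy tc'] unfolding t_def .
  have tcn: "t > real CARD('n)" using tc c_def by simp
  have bign: "2*t*(t - real CARD('n)) \<ge> (4*l + t + real CARD('n)) * (2 * real CARD('n))"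
    using big c_def by simp
  show "\<forall>p\<in>Paths1 x y l'. \<exists>q\<in>Paths1 (ext x y (\<epsilon>*l)) (ext y x (\<epsilon>*l)) (l' + 8*\<epsilon>*l). sublist p q"
  proof
    fix p assume p: "p \<in> Paths1 x y l'"
    have m: "ext x y t # p @ [ext y x t] \<in> Paths1 (ext x y t) (ext y x t) (l' + 2*t + 2*real CARD('n))"
      by (rule main_path[OF xy dxy l' tcn bign p])
    hence "ext x y t # p @ [ext y x t] \<in> Paths1 (ext x y t) (ext y x t) (l' + 8*\<epsilon>*l)"
      using budget unfolding c_def by (auto simp: Paths1_def Paths_def)
    moreover have "sublist p (ext x y t # p @ [ext y x t])"
      unfolding sublist_def by (rule exI[of _ "[ext x y t]"], rule exI[of _ "[ext y x t]"]) simp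
    ultimately show "\<exists>q\<in>Paths1 (ext x y (\<epsilon>*l)) (ext y x (\<epsilon>*l)) (l' + 8*\<epsilon>*l). sublist p q"
      unfolding t_def by blast
  qed
  show "\<forall>\<xi>\<in>AnimalsStar1 x y l'. \<exists>\<eta>\<in>AnimalsStar1 (ext x y (\<epsilon>*l)) (ext y x (\<epsilon>*l)) (l' + 8*\<epsilon>*l). animal_sub \<xi> \<eta>"
  proof
    fix \<xi> assume xi: "\<xi> \<in> AnimalsStar1 x y l'"
    obtain \<eta> where h: "\<eta> \<in> AnimalsStar1 (ext x y t) (ext y x t) (l' + 2*t + 2*real CARD('n))"
      "animal_sub \<xi> \<eta>"
      using main_animal[OF xy dxy l' tcn bign xi] by blast
    have "\<eta> \<in> AnimalsStar1 (ext x y t) (ext y x t) (l' + 8*\<epsilon>*l)"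
      using h(1) budget unfolding c_def by (auto simp: AnimalsStar1_def AnimalsStar_def)
    thus "\<exists>\<eta>\<in>AnimalsStar1 (ext x y (\<epsilon>*l)) (ext y x (\<epsilon>*l)) (l' + 8*\<epsilon>*l). animal_sub \<xi> \<eta>"
      using h(2) unfolding t_def by blast
  qed
qed

lemma M_pos:
  assumes "0 < (\<epsilon>::real)"
  shows "(3*real CARD('n::finite) + 4*real CARD('n)/\<epsilon>)/\<epsilon> + 2*real CARD('n) > 0"
  using assms by (intro add_pos_pos divide_pos_pos) auto

theorem lemma5p8:
  assumes "CARD('n) \<ge> 2"
  shows
   "(\<forall>\<epsilon>::real. 0 < \<epsilon> \<and> \<epsilon> < 1/8 \<longrightarrow>
      (\<forall>\<^sub>F l in at_top. l > 0 \<and>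
        (\<forall>(x::real^'n) y l'. x \<in> cball 0 (2*l) \<and> y \<in> cball 0 (2*l) \<and> x \<noteq> y \<and>
             dist x y \<le> l' \<and> l' \<le> 2*l \<longrightarrow>
           (\<exists>xh yh. xh \<in> cball 0 (3*l) \<and> lattice_pt xh \<and> yh \<in> cball 0 (3*l) \<and> lattice_pt yh \<and>
              dist xh yh \<ge> dist x y \<and>
              (\<forall>p\<in>Paths1 x y l'. \<exists>q\<in>Paths1 xh yh (l' + 8*\<epsilon>*l). sublist p q)))))
    \<and>
    (\<forall>\<epsilon>::real. 0 < \<epsilon> \<and> \<epsilon> < 1/8 \<longrightarrow>
      (\<forall>\<^sub>F l in at_top. l > 0 \<and>
        (\<forall>(x::real^'n) y l'. x \<in> cball 0 (2*l) \<and> y \<in> cball 0 (2*l) \<and> x \<noteq> y \<and>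
             dist x y \<le> l' \<and> l' \<le> 2*l \<longrightarrow>
           (\<exists>xh yh. xh \<in> cball 0 (3*l) \<and> lattice_pt xh \<and> yh \<in> cball 0 (3*l) \<and> lattice_pt yh \<and>
              dist xh yh \<ge> dist x y \<and>
              (\<forall>\<xi>\<in>AnimalsStar1 x y l'. \<exists>\<eta>\<in>AnimalsStar1 xh yh (l' + 8*\<epsilon>*l). animal_sub \<xi> \<eta>)))))"
  proof (intro conjI allI impI)
  fix \<epsilon> :: real assume e: "0 < \<epsilon> \<and> \<epsilon> < 1/8"
  let ?M = "(3*real CARD('n) + 4*real CARD('n)/\<epsilon>)/\<epsilon> + 2*real CARD('n)"
  show "\<forall>\<^sub>F l in at_top. l > 0 \<and>
        (\<forall>(x::real^'n) y l'. x \<in> cball 0 (2*l) \<and> y \<in> cball 0 (2*l) \<and> x \<noteq> y \<and>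
             dist x y \<le> l' \<and> l' \<le> 2*l \<longrightarrow>
           (\<exists>xh yh. xh \<in> cball 0 (3*l) \<and> lattice_pt xh \<and> yh \<in> cball 0 (3*l) \<and> lattice_pt yh \<and>
              dist xh yh \<ge> dist x y \<and>
              (\<forall>p\<in>Paths1 x y l'. \<exists>q\<in>Paths1 xh yh (l' + 8*\<epsilon>*l). sublist p q)))"
    apply (rule eventually_mono[OF eventually_ge_at_top[of ?M]])
    apply (intro conjI allI impI)
    subgoal for l using M_pos[of \<epsilon>, where 'n='n] e by linarith
    subgoal for l x y l'
      apply (elim conjE)
      apply (rule exI[of _ "ext x y (\<epsilon>*l)"], rule exI[of _ "ext y x (\<epsilon>*l)"])
      using key[of \<epsilon> l x y l'] e by auto
    done
next
  fix \<epsilon> :: real assume e: "0 < \<epsilon> \<and> \<epsilon> < 1/8"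
  let ?M = "(3*real CARD('n) + 4*real CARD('n)/\<epsilon>)/\<epsilon> + 2*real CARD('n)"
  show "\<forall>\<^sub>F l in at_top. l > 0 \<and>
        (\<forall>(x::real^'n) y l'. x \<in> cball 0 (2*l) \<and> y \<in> cball 0 (2*l) \<and> x \<noteq> y \<and>
             dist x y \<le> l' \<and> l' \<le> 2*l \<longrightarrow>
           (\<exists>xh yh. xh \<in> cball 0 (3*l) \<and> lattice_pt xh \<and> yh \<in> cball 0 (3*l) \<and> lattice_pt yh \<and>
              dist xh yh \<ge> dist x y \<and>
              (\<forall>\<xi>\<in>AnimalsStar1 x y l'. \<exists>\<eta>\<in>AnimalsStar1 xh yh (l' + 8*\<epsilon>*l). animal_sub \<xi> \<eta>)))"
    apply (rule eventually_mono[OF eventually_ge_at_top[of ?M]])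
    apply (intro conjI allI impI)
    subgoal for l using M_pos[of \<epsilon>, where 'n='n] e by linarith
    subgoal for l x y l'
      apply (elim conjE)
      apply (rule exI[of _ "ext x y (\<epsilon>*l)"], rule exI[of _ "ext y x (\<epsilon>*l)"])
      using key[of \<epsilon> l x y l'] e by auto
    done
qed

end
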